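(* Let $q=q_1q_2\cdots q_k$ be a permutation of $\{1,\dots,k\}$ with $q_1<q_k$. Let $p=p_1\cdots p_n$ be a permutation that very tightly contains $q$ at two different starting positions $i$ and $i+j$ with $1\le j$, i.e. both $p_{i+1}\cdots p_{i+k}$ and $p_{i+j+1}\cdots p_{i+j+k}$ are very tight copies of $q$. Then these two copies occupy disjoint sets of positions (i.e. $j\ge k$) unless there exists a positive integer $s\le k-1$ such that (1) the rightmost $s$ entries $q_{k-s+1},\dots,q_k$ of $q$ are the $s$ largest entries of $q$, and the leftmost $s$ entries $q_1,\dots,q_s$ of $q$ are the $s$ smallest entries of $q$; and (2) the sequence $q_1\cdots q_s$ and the sequence $q_{k-s+1}\cdots q_k$ are order-isomorphic (form the same pattern).
   Context: For a permutation $p=p_1\cdots p_n$ and a permutation $q=q_1\cdots q_k$ with $k<n$, a very tight copy of $q$ in $p$ starting at position $i$ (with $0\le i\le n-k$) means: for all $1\le j,r\le k$, $q_j<q_r$ if and only if $p_{i+j}<p_{i+r}$, and moreover $\{p_{i+1},\dots,p_{i+k}\}=\{a+1,\dots,a+k\}$ for some integer $0\le a\le n-k$ (the entries are in consecutive positions and form an interval of integers). Two sequences are order-isomorphic if their entries compare in the same way position by position. *)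

theory Defs
  imports Main
begin

text \<open>Permutations of {1..n} are represented as functions nat => nat (1-indexed),
 restricted to {1..n}.\<close>

definition is_perm :: "nat \<Rightarrow> (nat \<Rightarrow> nat) \<Rightarrow> bool" where
  "is_perm n p \<longleftrightarrow> bij_betw p {1..n} {1..n}"

definition very_tight_copy_at ::
  "nat \<Rightarrow> (nat \<Rightarrow> nat) \<Rightarrow> nat \<Rightarrow> (nat \<Rightarrow> nat) \<Rightarrow> nat \<Rightarrow> bool" where
  "very_tight_copy_at k q n p i \<longleftrightarrow>
     i \<le> n - k \<and>
     (\<forall>j\<in>{1..k}. \<forall>r\<in>{1..k}. q j < q r \<longleftrightarrow> p (i + j) < p (i + r)) \<and>
     (\<exists>a. a \<le> n - k \<and> p ` {i+1..i+k} = {a+1..a+k})"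

definition order_iso :: "nat \<Rightarrow> (nat \<Rightarrow> nat) \<Rightarrow> (nat \<Rightarrow> nat) \<Rightarrow> bool" where
  "order_iso s f g \<longleftrightarrow> (\<forall>j\<in>{1..s}. \<forall>r\<in>{1..s}. f j < f r \<longleftrightarrow> g j < g r)"

end

theory Submission
  imports Defs
begin

lemma rank_eq:
  fixes f :: "nat \<Rightarrow> nat"
  assumes b: "bij_betw f {1..k} {c+1..c+k}" and t: "t \<in> {1..k}"
  shows "f t = c + card {r\<in>{1..k}. f r \<le> f t}"
proof -
  have ft: "f t \<in> {c+1..c+k}" using b t by (auto simp: bij_betw_def)
  have img: "f ` {r\<in>{1..k}. f r \<le> f t} = {c+1..f t}"
  proof
    show "f ` {r\<in>{1..k}. f r \<le> f t} \<subseteq> {c+1..f t}"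
      using b by (auto simp: bij_betw_def)
  next
    show "{c+1..f t} \<subseteq> f ` {r\<in>{1..k}. f r \<le> f t}"
    proof
      fix y assume y: "y \<in> {c+1..f t}"
      then have "y \<in> {c+1..c+k}" using ft by auto
      then obtain r where "r \<in> {1..k}" "f r = y" using b unfolding bij_betw_def by (metis imageE)
      then show "y \<in> f ` {r\<in>{1..k}. f r \<le> f t}" using y by auto
    qed
  qed
  have "inj_on f {r\<in>{1..k}. f r \<le> f t}"
    using b unfolding bij_betw_def by (rule inj_on_subset[OF conjunct1]) auto
  then have "card {r\<in>{1..k}. f r \<le> f t} = card {c+1..f t}"
    using img card_image by metis
  then show ?thesis using ft by simp
qed

lemma copy_shift:
  assumes q: "is_perm k q" and p: "is_perm n p" and kn: "k < n"
    and c: "very_tight_copy_at k q n p i"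
  obtains a where "\<forall>t\<in>{1..k}. p (i+t) = a + q t"
    "p ` {i+1..i+k} = {a+1..a+k}" "i + k \<le> n"
proof -
  from c obtain a where i: "i \<le> n - k"
    and ord: "\<forall>j\<in>{1..k}. \<forall>r\<in>{1..k}. q j < q r \<longleftrightarrow> p (i + j) < p (i + r)"
    and im: "p ` {i+1..i+k} = {a+1..a+k}"
    unfolding very_tight_copy_at_def by blast
  have ik: "i + k \<le> n" using i kn by simp
  define g where "g = (\<lambda>t. p (i+t))"
  have gim: "g ` {1..k} = p ` {i+1..i+k}"
  proof
    show "g ` {1..k} \<subseteq> p ` {i+1..i+k}" unfolding g_def by auto
  next
    show "p ` {i+1..i+k} \<subseteq> g ` {1..k}"
    proof
      fix y assume "y \<in> p ` {i+1..i+k}"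
      then obtain x where x: "x \<in> {i+1..i+k}" "y = p x" by blast
      then have "x - i \<in> {1..k}" "g (x - i) = y" unfolding g_def by auto
      then show "y \<in> g ` {1..k}" by blast
    qed
  qed
  have "inj_on p {1..n}" using p unfolding is_perm_def bij_betw_def by blast
  note ip = this
  have "inj_on g {1..k}"
  proof (rule inj_onI)
    fix x y assume xy: "x \<in> {1..k}" "y \<in> {1..k}" "g x = g y"
    have "i + x \<in> {1..n}" "i + y \<in> {1..n}" using xy ik by auto
    then have "i + x = i + y" using ip xy(3) unfolding g_def inj_on_def by blast
    then show "x = y" by simp
  qed
  then have gb: "bij_betw g {1..k} {a+1..a+k}" using gim im by (simp add: bij_betw_def)
  have qb: "bij_betw q {1..k} {0+1..0+k}" using q by (simp add: is_perm_def)
  have "\<forall>t\<in>{1..k}. p (i+t) = a + q t"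
  proof
    fix t assume t: "t \<in> {1..k}"
    have "\<And>r. r \<in> {1..k} \<Longrightarrow> (g r \<le> g t \<longleftrightarrow> q r \<le> q t)"
      using ord t unfolding g_def by (meson not_le)
    then have "{r\<in>{1..k}. g r \<le> g t} = {r\<in>{1..k}. q r \<le> q t}"
      by blast
    then show "p (i+t) = a + q t"
      using rank_eq[OF gb t] rank_eq[OF qb t] unfolding g_def by simp
  qed
  then show ?thesis using that im ik by blast
qed

theorem proposition4p2:
  fixes k n i j :: nat and q p :: "nat \<Rightarrow> nat"
  assumes "is_perm k q" and "is_perm n p" and "k < n"
    and "q 1 < q k"
    and "1 \<le> j"
    and "very_tight_copy_at k q n p i"
    and "very_tight_copy_at k q n p (i + j)"
  shows "k \<le> j \<or>
    (\<exists>s. 1 \<le> s \<and> s \<le> k - 1 \<and>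
      q ` {k-s+1..k} = {k-s+1..k} \<and> q ` {1..s} = {1..s} \<and>
      order_iso s q (\<lambda>t. q (k - s + t)))"
proof (cases "k \<le> j")
  case True then show ?thesis by simp
next
  case False
  then have jk: "j < k" by simp
  define s where "s = k - j"
  have s1: "1 \<le> s" "s \<le> k - 1" "k - s = j" "k - s + 1 = j + 1"
    using jk assms(5) unfolding s_def by auto
  obtain a where P1: "\<forall>t\<in>{1..k}. p (i+t) = a + q t"
    and imA: "p ` {i+1..i+k} = {a+1..a+k}" and ik: "i + k \<le> n"
    using copy_shift[OF assms(1-3,6)] by blast
  obtain b where P2: "\<forall>t\<in>{1..k}. p (i+j+t) = b + q t"
    and imB: "p ` {i+j+1..i+j+k} = {b+1..b+k}" and ijk: "i + j + k \<le> n"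
    using copy_shift[OF assms(1-3,7)] by blast
  have rel: "a + q (j+t) = b + q t" if t: "t \<in> {1..s}" for t
  proof -
    have "j + t \<in> {1..k}" using t s_def jk by auto
    then have "p (i + (j+t)) = a + q (j+t)" using P1 by blast
    moreover have "p (i + j + t) = b + q t" using P2 t s_def by auto
    ultimately show ?thesis by (simp add: add.assoc)
  qed
  have ip: "inj_on p {1..n}" using assms(2) unfolding is_perm_def bij_betw_def by blast
  have iq: "inj_on q {1..k}" and qim: "q ` {1..k} = {1..k}"
    using assms(1) unfolding is_perm_def bij_betw_def by blast+
  have qr: "q t \<in> {1..k}" if "t \<in> {1..k}" for t using qim that by blast
  have dist: "a + j \<le> b \<or> b + j \<le> a"
  proof -
    have sub: "p ` {i+1..i+j+k} \<subseteq> {min a b + 1 .. max a b + k}"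
    proof
      fix y assume "y \<in> p ` {i+1..i+j+k}"
      then obtain x where x: "x \<in> {i+1..i+j+k}" "y = p x" by blast
      show "y \<in> {min a b + 1 .. max a b + k}"
      proof (cases "x \<le> i + k")
        case True
        then have "x \<in> {i+1..i+k}" using x by auto
        then have "y \<in> p ` {i+1..i+k}" using x(2) by blast
        then have "y \<in> {a+1..a+k}" using imA by simp
        then show ?thesis by auto
      next
        case False
        then have "x \<in> {i+j+1..i+j+k}" using x jk by auto
        then have "y \<in> p ` {i+j+1..i+j+k}" using x(2) by blast
        then have "y \<in> {b+1..b+k}" using imB by simp
        then show ?thesis by auto
      qed
    qed
    have "inj_on p {i+1..i+j+k}" by (rule inj_on_subset[OF ip]) (use ijk in auto)
    then have "card (p ` {i+1..i+j+k}) = j + k" by (simp add: card_image)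
    moreover have "card (p ` {i+1..i+j+k}) \<le> card {min a b + 1 .. max a b + k}"
      using sub by (rule card_mono[rotated]) simp
    ultimately show ?thesis by (auto simp: min_def max_def split: if_splits)
  qed
  have iqs: "inj_on q {1..s}" using iq by (rule inj_on_subset) (auto simp: s_def)
  have iqt: "inj_on q {j+1..k}" using iq by (rule inj_on_subset) auto
  have cs: "card (q ` {1..s}) = s" using iqs by (simp add: card_image)
  have ct: "card (q ` {j+1..k}) = s" using iqt by (simp add: card_image s_def)
  have tail: "\<exists>t\<in>{1..s}. x = j + t" if "x \<in> {j+1..k}" for x
    using that by (intro bexI[of _ "x - j"]) (auto simp: s_def)
  show ?thesis
  proof (cases "a + j \<le> b")
    case True
    define d where "d = b - a"
    have dj: "j \<le> d" using True d_def by simp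
    have rel2: "q (j+t) = q t + d" if "t \<in> {1..s}" for t
      using rel[OF that] True d_def by simp
    have "q ` {1..s} \<subseteq> {1..s}"
    proof
      fix y assume "y \<in> q ` {1..s}"
      then obtain t where t: "t \<in> {1..s}" "y = q t" by blast
      have "j + t \<in> {1..k}" "t \<in> {1..k}" using t s_def jk by auto
      then have "q (j+t) \<le> k" "1 \<le> q t" using qr by auto
      then show "y \<in> {1..s}" using rel2[OF t(1)] t dj s_def by auto
    qed
    then have A: "q ` {1..s} = {1..s}" using cs by (intro card_seteq) auto
    have "q ` {j+1..k} \<subseteq> {j+1..k}"
    proof
      fix y assume "y \<in> q ` {j+1..k}"
      then obtain x where x: "x \<in> {j+1..k}" "y = q x" by blast
      then obtain t where t: "t \<in> {1..s}" "x = j + t" using tail by blast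
      have "q x \<in> {1..k}" "t \<in> {1..k}" using x qr t s_def by auto
      then have "1 \<le> q t" "q x \<le> k" using qr by auto
      then show "y \<in> {j+1..k}" using rel2[OF t(1)] t x dj by auto
    qed
    then have B: "q ` {j+1..k} = {j+1..k}" using ct by (intro card_seteq) (auto simp: s_def)
    have C: "order_iso s q (\<lambda>t. q (k - s + t))"
      unfolding order_iso_def s1(3)
    proof (intro ballI)
      fix t r assume t: "t \<in> {1..s}" and r: "r \<in> {1..s}"
      show "q t < q r \<longleftrightarrow> q (j+t) < q (j+r)" using rel2[OF t] rel2[OF r] by simp
    qed
    show ?thesis using s1 A B C by (intro disjI2 exI[of _ s]) simp
  next
    case False
    then have bj: "b + j \<le> a" using dist by simp
    define d where "d = a - b"
    have dj: "j \<le> d" using bj d_def by simp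
    have rel2: "q t = q (j+t) + d" if "t \<in> {1..s}" for t
      using rel[OF that] bj d_def by simp
    have "q ` {j+1..k} \<subseteq> {1..s}"
    proof
      fix y assume "y \<in> q ` {j+1..k}"
      then obtain x where x: "x \<in> {j+1..k}" "y = q x" by blast
      then obtain t where t: "t \<in> {1..s}" "x = j + t" using tail by blast
      have "x \<in> {1..k}" "t \<in> {1..k}" using x t s_def by auto
      then have "1 \<le> q x" "q t \<le> k" using qr by auto
      then show "y \<in> {1..s}" using rel2[OF t(1)] t x dj s_def by auto
    qed
    then have B: "q ` {j+1..k} = {1..s}" using ct by (intro card_seteq) auto
    have "k \<in> {j+1..k}" using jk by auto
    then have qk: "q k \<le> s" using B by auto
    have q1: "s < q 1"
    proof (rule ccontr)
      assume "\<not> s < q 1"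
      moreover have "1 \<le> q 1" using qr jk by auto
      ultimately have "q 1 \<in> q ` {j+1..k}" using B by auto
      then obtain x where x: "x \<in> {j+1..k}" "q 1 = q x" by blast
      have "1 \<in> {1..k}" "x \<in> {1..k}" using x jk by auto
      then have "1 = x" using inj_onD[OF iq x(2)] by blast
      then show False using x assms(5) by auto
    qed
    then show ?thesis using qk assms(4) by simp
  qed
qed

end
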